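(* Let $M>0$, $T>0$, $X=[0,M]$ periodic, and fix $n\in\mathbf N$, $n\ge4$. Let $a,b$ be functions on $X\times[0,T]$, periodic in $x$, with $a\in C([0,T];C^{n+3})$, $a_t\in C([0,T];C^n)$, $b\in C([0,T];C^{n+2})$, $b_t\in C([0,T];C^n)$, and suppose there is $a_0>0$ with $a(x,t)\ge a_0$ for all $x,t$, and that $\bar\delta(t):=\frac1M\int_0^M\frac{b(y,t)}{|a(y,t)|}dy\ge0$ for all $t\in[0,T]$. (The lower-order coefficients $c,d\in C([0,T];C^n)$, $e\in L^\infty([0,T];H^n)$ play no role.) Define $$g_n(x,t):=\big(a(x,t)\big)^{1/2-n/3}\exp\Big[-\frac13\int_0^x\Big(\frac{b(y,t)}{a(y,t)}-\bar\delta(t)\Big)dy\Big].$$ Then $g_n$ satisfies: (C1) there is a constant $k_g>1$ with $k_g^{-1}\le g_n(x,t)\le k_g$ for all $x,t$; (C2) $g_n\in C([0,T];C^{n+3})$ and $\partial_tg_n\in C([0,T];C^n)$; (C3) $g_n$ and its first $n$ derivatives satisfy periodic boundary conditions; (C4) $\big(\tfrac32-n\big)a_x-b-3a\frac{\partial_xg_n}{g_n}\le0$ for all $x\in X$, $t\in[0,T]$.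
   Context: $C^k$ and $H^n$ denote spaces of $M$-periodic functions on $X$. *)

theory Defs
  imports "HOL-Analysis.Analysis"
begin

text \<open>Functions of (x,t) are modelled as real \<Rightarrow> real \<Rightarrow> real, defined for all real x
  (M-periodic extension of X = [0,M]) and only relevant for t in [0,T].\<close>

definition Ck_per :: "real \<Rightarrow> nat \<Rightarrow> (real \<Rightarrow> real) \<Rightarrow> bool" where
  "Ck_per M k f \<longleftrightarrow>
     (\<forall>x. f (x + M) = f x) \<and>
     (\<forall>j<k. \<forall>x. ((deriv ^^ j) f has_real_derivative (deriv ^^ Suc j) f x) (at x)) \<and>
     continuous_on UNIV ((deriv ^^ k) f)"

text \<open>C([0,T]; C^k): t \<mapsto> u(.,t) is continuous from [0,T] into C^k with its C^k norm
  (uniform convergence of all x-derivatives of order \<le> k).\<close>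
definition C_time_Ck :: "real \<Rightarrow> real \<Rightarrow> nat \<Rightarrow> (real \<Rightarrow> real \<Rightarrow> real) \<Rightarrow> bool" where
  "C_time_Ck M T k u \<longleftrightarrow>
     (\<forall>t\<in>{0..T}. Ck_per M k (\<lambda>x. u x t)) \<and>
     (\<forall>j\<le>k. \<forall>t\<in>{0..T}. \<forall>\<epsilon>>0. \<exists>\<delta>>0. \<forall>s\<in>{0..T}. \<bar>s - t\<bar> < \<delta> \<longrightarrow>
        (\<forall>x. \<bar>(deriv ^^ j) (\<lambda>y. u y s) x - (deriv ^^ j) (\<lambda>y. u y t) x\<bar> \<le> \<epsilon>))"

definition is_time_deriv :: "real \<Rightarrow> (real \<Rightarrow> real \<Rightarrow> real) \<Rightarrow> (real \<Rightarrow> real \<Rightarrow> real) \<Rightarrow> bool" where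
  "is_time_deriv T u ut \<longleftrightarrow>
     (\<forall>x. \<forall>t\<in>{0..T}. ((\<lambda>s. u x s) has_real_derivative ut x t) (at t within {0..T}))"

definition delta_bar :: "real \<Rightarrow> (real \<Rightarrow> real \<Rightarrow> real) \<Rightarrow> (real \<Rightarrow> real \<Rightarrow> real) \<Rightarrow> real \<Rightarrow> real" where
  "delta_bar M a b t = (1 / M) * (LBINT y=0..M. b y t / \<bar>a y t\<bar>)"

definition g_n :: "real \<Rightarrow> nat \<Rightarrow> (real \<Rightarrow> real \<Rightarrow> real) \<Rightarrow> (real \<Rightarrow> real \<Rightarrow> real) \<Rightarrow> real \<Rightarrow> real \<Rightarrow> real" where
  "g_n M n a b x t =
     a x t powr (1/2 - real n / 3) *
     exp (- (1/3) * (LBINT y=0..x. b y t / a y t - delta_bar M a b t))"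

end

theory Submission imports Defs begin


definition Dx :: "(real \<Rightarrow> real \<Rightarrow> real) \<Rightarrow> real \<Rightarrow> real \<Rightarrow> real" where
  "Dx u x t = deriv (\<lambda>y. u y t) x"

lemma per_deriv:
  assumes "\<forall>x. f (x + M) = f x" "\<forall>x. (f has_real_derivative deriv f x) (at x)"
  shows "deriv f (x + M) = deriv f x"
proof -
  have "((\<lambda>y. f (y + M)) has_real_derivative deriv f (x + M)) (at x)"
  proof -
    have "((\<lambda>y. y + M) has_real_derivative 1) (at x)" by (auto intro!: derivative_eq_intros)
    from DERIV_chain2[where f=f and g="\<lambda>y. y + M" and x=x, OF _ this] assms(2) show ?thesis by simp
  qed
  moreover have "(\<lambda>y. f (y + M)) = f" using assms(1) by auto
  ultimately show ?thesis using assms(2) DERIV_unique by metis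
qed

lemma Ck_per_0: "Ck_per M 0 f \<longleftrightarrow> (\<forall>x. f (x + M) = f x) \<and> continuous_on UNIV f"
  by (simp add: Ck_per_def)

lemma Ck_per_Suc: "Ck_per M (Suc k) f \<longleftrightarrow> (\<forall>x. f (x + M) = f x) \<and>
   (\<forall>x. (f has_real_derivative deriv f x) (at x)) \<and> Ck_per M k (deriv f)"
proof
  assume A: "Ck_per M (Suc k) f"
  then have p: "\<forall>x. f (x + M) = f x" and d: "\<forall>x. (f has_real_derivative deriv f x) (at x)"
    unfolding Ck_per_def by (auto dest: spec[of _ 0])
  have "\<forall>j<k. \<forall>x. ((deriv ^^ j) (deriv f) has_real_derivative (deriv ^^ Suc j) (deriv f) x) (at x)"
    using A unfolding Ck_per_def
    by (metis Suc_mono funpow_Suc_right o_apply)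
  moreover have "continuous_on UNIV ((deriv ^^ k) (deriv f))"
    using A unfolding Ck_per_def by (metis funpow_Suc_right o_apply)
  ultimately show "(\<forall>x. f (x + M) = f x) \<and>
   (\<forall>x. (f has_real_derivative deriv f x) (at x)) \<and> Ck_per M k (deriv f)"
    using p d per_deriv[OF p d] unfolding Ck_per_def by auto
next
  assume A: "(\<forall>x. f (x + M) = f x) \<and>
   (\<forall>x. (f has_real_derivative deriv f x) (at x)) \<and> Ck_per M k (deriv f)"
  have "\<forall>j<Suc k. \<forall>x. ((deriv ^^ j) f has_real_derivative (deriv ^^ Suc j) f x) (at x)"
  proof (intro allI impI)
    fix j x assume "j < Suc k"
    then show "((deriv ^^ j) f has_real_derivative (deriv ^^ Suc j) f x) (at x)"
    proof (cases j)
      case 0 then show ?thesis using A by simp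
    next
      case (Suc i) then show ?thesis using A \<open>j < Suc k\<close> unfolding Ck_per_def
        by (metis Suc_less_SucD funpow_Suc_right o_apply)
    qed
  qed
  then show "Ck_per M (Suc k) f" using A unfolding Ck_per_def by (metis funpow_Suc_right o_apply)
qed

lemma C_time_0: "C_time_Ck M T 0 u \<longleftrightarrow>
   (\<forall>t\<in>{0..T}. (\<forall>x. u (x + M) t = u x t) \<and> continuous_on UNIV (\<lambda>x. u x t)) \<and>
   (\<forall>t\<in>{0..T}. \<forall>\<epsilon>>0. \<exists>\<delta>>0. \<forall>s\<in>{0..T}. \<bar>s - t\<bar> < \<delta> \<longrightarrow> (\<forall>x. \<bar>u x s - u x t\<bar> \<le> \<epsilon>))"
  by (simp add: C_time_Ck_def Ck_per_0)

lemma C_time_Suc: "C_time_Ck M T (Suc k) u \<longleftrightarrow> C_time_Ck M T 0 u \<and>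
   (\<forall>t\<in>{0..T}. \<forall>x. ((\<lambda>y. u y t) has_real_derivative Dx u x t) (at x)) \<and> C_time_Ck M T k (Dx u)"
proof -
  have e: "(\<lambda>y. Dx u y t) = deriv (\<lambda>y. u y t)" for t by (simp add: Dx_def[abs_def])
  have f: "(deriv ^^ Suc j) (\<lambda>y. u y s) = (deriv ^^ j) (\<lambda>y. Dx u y s)" for j s
    by (simp only: funpow_Suc_right comp_apply e)
  have u: "(\<forall>j\<le>Suc k. P j) \<longleftrightarrow> P 0 \<and> (\<forall>j\<le>k. P (Suc j))" for P
    by (metis Suc_le_mono le_SucE less_Suc_eq_0_disj less_Suc_eq_le)
  have c: "(\<forall>x. (g has_real_derivative deriv g x) (at x)) \<Longrightarrow> continuous_on UNIV g" for g :: "real \<Rightarrow> real"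
    by (meson DERIV_isCont continuous_at_imp_continuous_on)
  show ?thesis
    unfolding C_time_Ck_def u f Ck_per_Suc Ck_per_0 e
    using c by (auto simp: Dx_def)
qed


lemma per_int:
  assumes "\<forall>x. f (x + M) = f x"
  shows "f (x + real_of_int k * M) = f (x::real)"
proof (induction k arbitrary: x rule: int_induct[where k=0])
  case base then show ?case by simp
next
  case (step1 i) then show ?case using assms
    by (metis (no_types, opaque_lifting) add.commute add.left_commute distrib_left mult.commute mult.right_neutral of_int_add of_int_1)
next
  case (step2 i)
  have "f (x + real_of_int (i - 1) * M) = f (x + real_of_int (i - 1) * M + M)" using assms by simp
  also have "\<dots> = f (x + real_of_int i * M)" by (simp add: algebra_simps)
  finally show ?case using step2 by simp
qed

lemma per_red:
  assumes "\<forall>x. f (x + M) = f x" "M > 0"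
  shows "\<exists>y\<in>{0..M}. f x = f (y::real)"
proof -
  let ?k = "\<lfloor>x / M\<rfloor>"
  have "f (x + real_of_int (- ?k) * M) = f x" by (rule per_int[OF assms(1)])
  moreover have "x + real_of_int (- ?k) * M \<in> {0..M}"
  proof -
    have a: "real_of_int ?k \<le> x / M" and b: "x / M < real_of_int ?k + 1" by linarith+
    have "real_of_int ?k * M \<le> x" using a pos_le_divide_eq[OF assms(2)] by simp
    moreover have "x < (real_of_int ?k + 1) * M" by (metis b pos_divide_less_eq[OF assms(2)])
    ultimately show ?thesis by (auto simp: algebra_simps)
  qed
  ultimately show ?thesis by metis
qed

context fixes M T :: real assumes MT: "M > 0" "T > 0"
begin

lemma P_cong:
  assumes "C_time_Ck M T k u" "\<And>x t. t \<in> {0..T} \<Longrightarrow> u x t = v x t"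
  shows "C_time_Ck M T k v"
proof -
  have e: "t \<in> {0..T} \<Longrightarrow> (\<lambda>x. u x t) = (\<lambda>x. v x t)" for t using assms(2) by auto
  show ?thesis using assms(1) unfolding C_time_Ck_def
    by (simp add: e)
qed

lemma P_mono: "C_time_Ck M T (Suc k) u \<Longrightarrow> C_time_Ck M T k u"
proof (induction k arbitrary: u)
  case 0 then show ?case using C_time_Suc by blast
next
  case (Suc k) then show ?case using C_time_Suc[of M T "Suc k" u] C_time_Suc[of M T k u] by blast
qed

lemma P_mono': "C_time_Ck M T k u \<Longrightarrow> j \<le> k \<Longrightarrow> C_time_Ck M T j u"
  by (induction k) (auto intro: P_mono simp: le_Suc_eq)

lemma P0_cont:
  assumes "C_time_Ck M T 0 u"
  shows "continuous_on (UNIV \<times> {0..T}) (\<lambda>(x,t). u x t)"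
  unfolding continuous_on_iff
proof (intro ballI allI impI)
  fix z :: "real \<times> real" and e :: real assume z: "z \<in> UNIV \<times> {0..T}" and e: "0 < e"
  obtain x t where zxt: "z = (x,t)" and t: "t \<in> {0..T}" using z by auto
  obtain d1 where d1: "d1 > 0" "\<forall>s\<in>{0..T}. \<bar>s - t\<bar> < d1 \<longrightarrow> (\<forall>x. \<bar>u x s - u x t\<bar> \<le> e/2)"
    using assms t e unfolding C_time_0 by (meson half_gt_zero)
  have "continuous_on UNIV (\<lambda>x. u x t)" using assms t unfolding C_time_0 by auto
  then obtain d2 where d2: "d2 > 0" "\<forall>y. dist y x < d2 \<longrightarrow> dist (u y t) (u x t) < e/2"
    unfolding continuous_on_iff using e by (meson UNIV_I half_gt_zero)
  show "\<exists>d>0. \<forall>z'\<in>UNIV \<times> {0..T}. dist z' z < d \<longrightarrow> dist ((\<lambda>(x,t). u x t) z') ((\<lambda>(x,t). u x t) z) < e"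
  proof (intro exI[of _ "min d1 d2"] conjI ballI impI)
    fix z' assume z': "z' \<in> UNIV \<times> {0..T}" and ds: "dist z' z < min d1 d2"
    obtain y s where z'ys: "z' = (y,s)" and s: "s \<in> {0..T}" using z' by auto
    have "dist y x \<le> dist (y,s) (x,t)" "dist s t \<le> dist (y,s) (x,t)"
      by (metis dist_fst_le fst_conv, metis dist_snd_le snd_conv)
    then have "dist y x < d2" "\<bar>s - t\<bar> < d1" using ds zxt z'ys by (auto simp: dist_real_def)
    then have "\<bar>u y s - u y t\<bar> \<le> e/2" "\<bar>u y t - u x t\<bar> < e/2" using d1 d2 s by (auto simp: dist_real_def)
    then show "dist ((\<lambda>(x,t). u x t) z') ((\<lambda>(x,t). u x t) z) < e"
      using abs_triangle_ineq[of "u y s - u y t" "u y t - u x t"] zxt z'ys unfolding dist_real_def by simp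
  qed (use d1 d2 in simp)
qed

lemma P0_per: "C_time_Ck M T 0 u \<Longrightarrow> t \<in> {0..T} \<Longrightarrow> \<exists>y\<in>{0..M}. u x t = u y t"
  using per_red[of "\<lambda>x. u x t" M x] MT unfolding C_time_0 by auto

lemma P0_bdd:
  assumes "C_time_Ck M T 0 u"
  shows "\<exists>B. \<forall>x. \<forall>t\<in>{0..T}. \<bar>u x t\<bar> \<le> B"
proof -
  have "compact ((\<lambda>(x,t). u x t) ` ({0..M} \<times> {0..T}))"
    by (rule compact_continuous_image[OF continuous_on_subset[OF P0_cont[OF assms]]])
       (auto intro: compact_Times)
  then obtain B where B: "\<forall>z\<in>(\<lambda>(x,t). u x t) ` ({0..M} \<times> {0..T}). norm z \<le> B"
    using compact_imp_bounded bounded_iff by metis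
  show ?thesis
  proof (intro exI allI ballI)
    fix x t assume t: "t \<in> {0..T}"
    then obtain y where "y \<in> {0..M}" "u x t = u y t" using P0_per assms by blast
    then show "\<bar>u x t\<bar> \<le> B" using B t by force
  qed
qed

end


context fixes M T :: real assumes MT: "M > 0" "T > 0"
begin

abbreviation "P k u \<equiv> C_time_Ck M T k u"

lemma P_SucI:
  assumes "P 0 w" "\<And>t x. t \<in> {0..T} \<Longrightarrow> ((\<lambda>y. w y t) has_real_derivative w' x t) (at x)" "P k w'"
  shows "P (Suc k) w"
proof -
  have "Dx w x t = w' x t" if "t \<in> {0..T}" for x t
    unfolding Dx_def using assms(2)[OF that] by (rule DERIV_imp_deriv)
  then have "P k (Dx w)" using P_cong[OF MT assms(3)] by metis
  moreover have "\<forall>t\<in>{0..T}. \<forall>x. ((\<lambda>y. w y t) has_real_derivative Dx w x t) (at x)"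
    using assms(2) \<open>\<And>x t. t \<in> {0..T} \<Longrightarrow> Dx w x t = w' x t\<close> by simp
  ultimately show ?thesis using assms(1) C_time_Suc by blast
qed

lemma P_SucD:
  assumes "P (Suc k) u"
  shows "P 0 u" "\<And>t x. t \<in> {0..T} \<Longrightarrow> ((\<lambda>y. u y t) has_real_derivative Dx u x t) (at x)" "P k (Dx u)" "P k u"
  using assms C_time_Suc P_mono[OF MT] by blast+

lemma P0_const:
  assumes "continuous_on {0..T} c"
  shows "P 0 (\<lambda>x t. c t)"
  unfolding C_time_0
proof (intro conjI ballI allI impI)
  fix t e :: real assume t: "t \<in> {0..T}" and e: "0 < e"
  then obtain d where "d > 0" "\<forall>s\<in>{0..T}. dist s t < d \<longrightarrow> dist (c s) (c t) < e"
    using assms unfolding continuous_on_iff by blast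
  then show "\<exists>\<delta>>0. \<forall>s\<in>{0..T}. \<bar>s - t\<bar> < \<delta> \<longrightarrow> (\<forall>x. \<bar>c s - c t\<bar> \<le> e)"
    by (auto simp: dist_real_def intro!: exI[of _ d] less_imp_le)
qed auto

lemma P0_add:
  assumes "P 0 u" "P 0 v"
  shows "P 0 (\<lambda>x t. u x t + v x t)"
  unfolding C_time_0
proof (intro conjI ballI allI impI)
  fix t e :: real assume t: "t \<in> {0..T}" and e: "0 < e"
  obtain d1 where d1: "d1 > 0" "\<forall>s\<in>{0..T}. \<bar>s - t\<bar> < d1 \<longrightarrow> (\<forall>x. \<bar>u x s - u x t\<bar> \<le> e/2)"
    using assms t e unfolding C_time_0 by (meson half_gt_zero)
  obtain d2 where d2: "d2 > 0" "\<forall>s\<in>{0..T}. \<bar>s - t\<bar> < d2 \<longrightarrow> (\<forall>x. \<bar>v x s - v x t\<bar> \<le> e/2)"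
    using assms t e unfolding C_time_0 by (meson half_gt_zero)
  show "\<exists>\<delta>>0. \<forall>s\<in>{0..T}. \<bar>s - t\<bar> < \<delta> \<longrightarrow> (\<forall>x. \<bar>u x s + v x s - (u x t + v x t)\<bar> \<le> e)"
  proof (intro exI[of _ "min d1 d2"] conjI ballI impI allI)
    fix s x assume "s \<in> {0..T}" "\<bar>s - t\<bar> < min d1 d2"
    then have "\<bar>u x s - u x t\<bar> \<le> e/2" "\<bar>v x s - v x t\<bar> \<le> e/2" using d1 d2 by auto
    then show "\<bar>u x s + v x s - (u x t + v x t)\<bar> \<le> e" by linarith
  qed (use d1 d2 in simp)
next
  fix t :: real assume t: "t \<in> {0..T}"
  then show "continuous_on UNIV (\<lambda>x. u x t + v x t)" using assms unfolding C_time_0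
    by (auto intro!: continuous_intros)
  fix x show "u (x + M) t + v (x + M) t = u x t + v x t" using assms t unfolding C_time_0 by auto
qed

lemma P0_mult:
  assumes "P 0 u" "P 0 v"
  shows "P 0 (\<lambda>x t. u x t * v x t)"
  unfolding C_time_0
proof (intro conjI ballI allI impI)
  fix t e :: real assume t: "t \<in> {0..T}" and e: "0 < e"
  obtain Bu where Bu: "\<forall>x. \<forall>t\<in>{0..T}. \<bar>u x t\<bar> \<le> Bu" using P0_bdd[OF MT assms(1)] by blast
  obtain Bv where Bv: "\<forall>x. \<forall>t\<in>{0..T}. \<bar>v x t\<bar> \<le> Bv" using P0_bdd[OF MT assms(2)] by blast
  define K where "K = \<bar>Bu\<bar> + \<bar>Bv\<bar> + 1"
  have K: "K > 0" unfolding K_def by simp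
  have eK: "e / K > 0" using e K by simp
  obtain d1 where d1: "d1 > 0" "\<forall>s\<in>{0..T}. \<bar>s - t\<bar> < d1 \<longrightarrow> (\<forall>x. \<bar>u x s - u x t\<bar> \<le> e/K)"
    using assms t eK unfolding C_time_0 by meson
  obtain d2 where d2: "d2 > 0" "\<forall>s\<in>{0..T}. \<bar>s - t\<bar> < d2 \<longrightarrow> (\<forall>x. \<bar>v x s - v x t\<bar> \<le> e/K)"
    using assms t eK unfolding C_time_0 by meson
  show "\<exists>\<delta>>0. \<forall>s\<in>{0..T}. \<bar>s - t\<bar> < \<delta> \<longrightarrow> (\<forall>x. \<bar>u x s * v x s - u x t * v x t\<bar> \<le> e)"
  proof (intro exI[of _ "min d1 d2"] conjI ballI impI allI)
    fix s x assume s: "s \<in> {0..T}" "\<bar>s - t\<bar> < min d1 d2"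
    then have a: "\<bar>u x s - u x t\<bar> \<le> e/K" "\<bar>v x s - v x t\<bar> \<le> e/K" using d1 d2 by auto
    have b: "\<bar>u x s\<bar> \<le> \<bar>Bu\<bar>" "\<bar>v x t\<bar> \<le> \<bar>Bv\<bar>" by (meson Bu s(1) abs_ge_self order_trans, meson Bv t abs_ge_self order_trans)
    have "\<bar>u x s * v x s - u x t * v x t\<bar> = \<bar>u x s * (v x s - v x t) + v x t * (u x s - u x t)\<bar>"
      by (simp add: algebra_simps)
    also have "\<dots> \<le> \<bar>u x s\<bar> * \<bar>v x s - v x t\<bar> + \<bar>v x t\<bar> * \<bar>u x s - u x t\<bar>"
      by (metis abs_mult abs_triangle_ineq)
    also have "\<dots> \<le> \<bar>Bu\<bar> * (e/K) + \<bar>Bv\<bar> * (e/K)"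
      by (intro add_mono mult_mono a b) auto
    also have "\<dots> \<le> K * (e/K)"
    proof -
      have "(\<bar>Bu\<bar> + \<bar>Bv\<bar>) * (e/K) \<le> K * (e/K)" using eK by (intro mult_right_mono) (auto simp: K_def)
      then show ?thesis by (metis distrib_right)
    qed
    also have "\<dots> = e" using K by simp
    finally show "\<bar>u x s * v x s - u x t * v x t\<bar> \<le> e" .
  qed (use d1 d2 in simp)
next
  fix t :: real assume t: "t \<in> {0..T}"
  then show "continuous_on UNIV (\<lambda>x. u x t * v x t)" using assms unfolding C_time_0
    by (auto intro!: continuous_intros)
  fix x show "u (x + M) t * v (x + M) t = u x t * v x t" using assms t unfolding C_time_0 by auto
qed

lemma P0_comp:
  assumes "P 0 u" "\<And>x t. t \<in> {0..T} \<Longrightarrow> u x t \<in> S" "uniformly_continuous_on S \<phi>"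
  shows "P 0 (\<lambda>x t. \<phi> (u x t))"
  unfolding C_time_0
proof (intro conjI ballI allI impI)
  fix t e :: real assume t: "t \<in> {0..T}" and e: "0 < e"
  obtain d where d: "d > 0" "\<forall>x\<in>S. \<forall>x'\<in>S. dist x' x < d \<longrightarrow> dist (\<phi> x') (\<phi> x) < e"
    using assms(3) e unfolding uniformly_continuous_on_def by blast
  obtain d1 where d1: "d1 > 0" "\<forall>s\<in>{0..T}. \<bar>s - t\<bar> < d1 \<longrightarrow> (\<forall>x. \<bar>u x s - u x t\<bar> \<le> d/2)"
    using assms t d unfolding C_time_0 by (meson half_gt_zero)
  show "\<exists>\<delta>>0. \<forall>s\<in>{0..T}. \<bar>s - t\<bar> < \<delta> \<longrightarrow> (\<forall>x. \<bar>\<phi> (u x s) - \<phi> (u x t)\<bar> \<le> e)"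
  proof (intro exI[of _ d1] conjI ballI impI allI)
    fix s x assume s: "s \<in> {0..T}" "\<bar>s - t\<bar> < d1"
    then have "\<bar>u x s - u x t\<bar> \<le> d/2" using d1 by blast
    then have "dist (u x s) (u x t) < d" using d by (simp add: dist_real_def)
    moreover have "u x s \<in> S" "u x t \<in> S" using assms(2) s t by auto
    ultimately have "dist (\<phi> (u x s)) (\<phi> (u x t)) < e" using d(2) by blast
    then show "\<bar>\<phi> (u x s) - \<phi> (u x t)\<bar> \<le> e" by (simp add: dist_real_def)
  qed (use d1 in simp)
next
  fix t :: real assume t: "t \<in> {0..T}"
  have "continuous_on UNIV (\<lambda>x. u x t)" using assms t unfolding C_time_0 by auto
  then show "continuous_on UNIV (\<lambda>x. \<phi> (u x t))"
    using continuous_on_compose2[OF uniformly_continuous_imp_continuous[OF assms(3)], of UNIV "\<lambda>x. u x t"]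
      assms(2) t by auto
  fix x show "\<phi> (u (x + M) t) = \<phi> (u x t)" using assms t unfolding C_time_0 by auto
qed

lemma P_const: "continuous_on {0..T} c \<Longrightarrow> P k (\<lambda>x t. c t)"
proof (induction k arbitrary: c)
  case 0 then show ?case by (rule P0_const)
next
  case (Suc k)
  show ?case
    by (rule P_SucI[where w'="\<lambda>x t. 0"]) (auto intro!: P0_const Suc)
qed

lemma P_add: "P k u \<Longrightarrow> P k v \<Longrightarrow> P k (\<lambda>x t. u x t + v x t)"
proof (induction k arbitrary: u v)
  case 0 then show ?case by (rule P0_add)
next
  case (Suc k)
  show ?case
    by (rule P_SucI[where w'="\<lambda>x t. Dx u x t + Dx v x t"])
       (auto intro!: P0_add Suc.IH P_SucD[OF Suc.prems(1)] P_SucD[OF Suc.prems(2)] derivative_eq_intros)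
qed

lemma P_mult: "P k u \<Longrightarrow> P k v \<Longrightarrow> P k (\<lambda>x t. u x t * v x t)"
proof (induction k arbitrary: u v)
  case 0 then show ?case by (rule P0_mult)
next
  case (Suc k)
  note U = P_SucD[OF Suc.prems(1)] and V = P_SucD[OF Suc.prems(2)]
  show ?case
    by (rule P_SucI[where w'="\<lambda>x t. Dx u x t * v x t + u x t * Dx v x t"])
       (auto intro!: P0_mult P_add Suc.IH U V derivative_eq_intros)
qed

lemma P_cmult: "P k u \<Longrightarrow> P k (\<lambda>x t. c * u x t)"
  using P_mult[OF P_const[of "\<lambda>t. c"]] by auto

lemma P_diff: "P k u \<Longrightarrow> P k v \<Longrightarrow> P k (\<lambda>x t. u x t - v x t)"
  using P_add[of k u "\<lambda>x t. (-1) * v x t"] P_cmult[of k v "-1"] by simp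

lemma P_exp: "P k u \<Longrightarrow> P k (\<lambda>x t. exp (u x t))"
proof (induction k arbitrary: u)
  case 0
  obtain B where B: "\<forall>x. \<forall>t\<in>{0..T}. \<bar>u x t\<bar> \<le> B" using P0_bdd[OF MT 0] by blast
  have m: "u x t \<in> {-B..B}" if "t \<in> {0..T}" for x t
  proof -
    have "\<bar>u x t\<bar> \<le> B" using B that by blast
    then have "u x t \<le> B" "-u x t \<le> B" by (simp_all add: abs_le_iff)
    then show ?thesis by simp
  qed
  show ?case
    by (rule P0_comp[OF 0 m]) (auto intro!: compact_uniformly_continuous continuous_intros)
next
  case (Suc k)
  note U = P_SucD[OF Suc.prems(1)]
  have e: "P k (\<lambda>x t. exp (u x t))" by (rule Suc.IH[OF U(4)])
  have "P 0 (\<lambda>x t. exp (u x t))" using P_mono'[OF MT e] by simp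
  then show ?case
    by (rule P_SucI[where w'="\<lambda>x t. exp (u x t) * Dx u x t"])
       (auto intro!: P_mult Suc.IH U derivative_eq_intros)
qed

lemma P_inv:
  assumes "c > 0" "\<And>x t. t \<in> {0..T} \<Longrightarrow> u x t \<ge> c" "P k u"
  shows "P k (\<lambda>x t. 1 / u x t)"
  using assms(3)
proof (induction k)
  case 0
  obtain B where B: "\<forall>x. \<forall>t\<in>{0..T}. \<bar>u x t\<bar> \<le> B" using P0_bdd[OF MT 0] by blast
  have m: "u x t \<in> {c..B}" if "t \<in> {0..T}" for x t
  proof -
    have "\<bar>u x t\<bar> \<le> B" using B that by blast
    then have "u x t \<le> B" by (simp add: abs_le_iff)
    moreover have "c \<le> u x t" using assms(2)[OF that] by blast
    ultimately show ?thesis by simp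
  qed
  have "continuous_on {c..B} (\<lambda>y. 1 / y)" using assms(1) by (intro continuous_intros) auto
  then show ?case
    by (intro P0_comp[OF 0 m] compact_uniformly_continuous) auto
next
  case (Suc k)
  note U = P_SucD[OF Suc.prems(1)]
  have e: "P k (\<lambda>x t. 1 / u x t)" by (rule Suc.IH[OF U(4)])
  have "P 0 (\<lambda>x t. 1 / u x t)" using P_mono'[OF MT e] by simp
  then show ?case
  proof (rule P_SucI[ where w'="\<lambda>x t. (-1) * (Dx u x t * ((1 / u x t) * (1 / u x t)))"])
    fix t x assume t: "t \<in> {0..T}"
    have "c \<le> u x t" by (rule assms(2)[OF t])
    then have nz: "u x t \<noteq> 0" using assms(1) by auto
    show "((\<lambda>y. 1 / u y t) has_real_derivative (-1) * (Dx u x t * ((1 / u x t) * (1 / u x t)))) (at x)"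
      using U(2)[OF t, of x] nz
      by (auto intro!: derivative_eq_intros simp: field_simps power2_eq_square)
  next
    show "P k (\<lambda>x t. (-1) * (Dx u x t * ((1 / u x t) * (1 / u x t))))"
      by (intro P_cmult P_mult U e)
  qed
qed

lemma P_ln:
  assumes "c > 0" "\<And>x t. t \<in> {0..T} \<Longrightarrow> u x t \<ge> c" "P k u"
  shows "P k (\<lambda>x t. ln (u x t))"
proof (cases k)
  case 0
  obtain B where B: "\<forall>x. \<forall>t\<in>{0..T}. \<bar>u x t\<bar> \<le> B" using P0_bdd[OF MT] assms(3) 0 by blast
  have m: "u x t \<in> {c..B}" if "t \<in> {0..T}" for x t
  proof -
    have "\<bar>u x t\<bar> \<le> B" using B that by blast
    then have "u x t \<le> B" by (simp add: abs_le_iff)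
    moreover have "c \<le> u x t" using assms(2)[OF that] by blast
    ultimately show ?thesis by simp
  qed
  have "continuous_on {c..B} ln" using assms(1) by (intro continuous_intros) auto
  then show ?thesis unfolding 0
    by (intro P0_comp[OF assms(3)[unfolded 0] m] compact_uniformly_continuous) auto
next
  case (Suc j)
  note U = P_SucD[OF assms(3)[unfolded Suc]]
  have "P 0 (\<lambda>x t. ln (u x t))"
  proof -
    obtain B where B: "\<forall>x. \<forall>t\<in>{0..T}. \<bar>u x t\<bar> \<le> B" using P0_bdd[OF MT U(1)] by blast
    have m: "u x t \<in> {c..B}" if "t \<in> {0..T}" for x t
    proof -
      have "\<bar>u x t\<bar> \<le> B" using B that by blast
      then have "u x t \<le> B" by (simp add: abs_le_iff)
      moreover have "c \<le> u x t" using assms(2)[OF that] by blast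
    ultimately show ?thesis by simp
    qed
    have "continuous_on {c..B} ln" using assms(1) by (intro continuous_intros) auto
    then show ?thesis
      by (intro P0_comp[OF U(1) m] compact_uniformly_continuous) auto
  qed
  then show ?thesis unfolding Suc
  proof (rule P_SucI[ where w'="\<lambda>x t. Dx u x t * (1 / u x t)"])
    fix t x assume t: "t \<in> {0..T}"
    have "c \<le> u x t" by (rule assms(2)[OF t])
    then have nz: "u x t > 0" using assms(1) by auto
    show "((\<lambda>y. ln (u y t)) has_real_derivative Dx u x t * (1 / u x t)) (at x)"
      using U(2)[OF t, of x] nz
      by (auto intro!: derivative_eq_intros simp: field_simps)
  next
    show "P j (\<lambda>x t. Dx u x t * (1 / u x t))"
      by (intro P_mult U P_inv[OF assms(1,2)])
  qed
qed

end


definition meanM :: "real \<Rightarrow> (real \<Rightarrow> real \<Rightarrow> real) \<Rightarrow> real \<Rightarrow> real" where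
  "meanM M h t = (1 / M) * (LBINT y=0..M. h y t)"

definition Iop :: "real \<Rightarrow> (real \<Rightarrow> real \<Rightarrow> real) \<Rightarrow> real \<Rightarrow> real \<Rightarrow> real" where
  "Iop M h x t = (LBINT y=0..x. (h y t - meanM M h t))"

lemma LBINT_deriv:
  fixes f :: "real \<Rightarrow> real"
  assumes "continuous_on UNIV f"
  shows "((\<lambda>u. LBINT y=0..u. f y) has_real_derivative f x) (at x)"
proof -
  let ?a = "min (-1) (x - 1)" and ?b = "max 1 (x + 1)"
  have "((\<lambda>u. LBINT y=0..u. f y) has_vector_derivative f x) (at x within {?a..?b})"
    using interval_integral_FTC2[of ?a 0 ?b f x] continuous_on_subset[OF assms]
    by (simp add: zero_ereal_def)
  moreover have "at x within {?a..?b} = at x" by (rule at_within_Icc_at) auto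
  ultimately show ?thesis by (simp add: has_real_derivative_iff_has_vector_derivative)
qed

lemma LBINT_eq:
  fixes f :: "real \<Rightarrow> real"
  assumes "continuous_on UNIV f" "0 \<le> x"
  shows "(LBINT y=0..x. f y) = integral {0..x} f"
  using interval_integral_eq_integral[OF assms(2)]
     borel_integrable_atLeastAtMost'[OF continuous_on_subset[OF assms(1)], of 0 x]
  by (simp add: zero_ereal_def)

lemma red_ex: "(M::real) > 0 \<Longrightarrow> \<exists>k::int. x + real_of_int k * M \<in> {0..M}"
proof -
  assume M: "M > 0"
  let ?k = "\<lfloor>x / M\<rfloor>"
  have a: "real_of_int ?k \<le> x / M" and b: "x / M < real_of_int ?k + 1" by linarith+
  have "real_of_int ?k * M \<le> x" using a pos_le_divide_eq[OF M] by simp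
  moreover have "x < (real_of_int ?k + 1) * M" by (metis b pos_divide_less_eq[OF M])
  ultimately have "x + real_of_int (- ?k) * M \<in> {0..M}" by (auto simp: algebra_simps)
  then show ?thesis by blast
qed

context fixes M T :: real assumes MT: "M > 0" "T > 0"
begin

lemma P0_xcont: "P M T 0 h \<Longrightarrow> t \<in> {0..T} \<Longrightarrow> continuous_on UNIV (\<lambda>y. h y t)"
  unfolding C_time_0 by auto

lemma P0_xper: "P M T 0 h \<Longrightarrow> t \<in> {0..T} \<Longrightarrow> h (x + M) t = h x t"
  unfolding C_time_0 by auto

lemma mean_int: "P M T 0 h \<Longrightarrow> t \<in> {0..T} \<Longrightarrow> meanM M h t = (1/M) * integral {0..M} (\<lambda>y. h y t)"
  unfolding meanM_def using LBINT_eq[OF P0_xcont, of h t M] MT by simp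

lemma mean_est:
  assumes h: "P M T 0 h" and t: "t \<in> {0..T}" and e: "e > 0"
  shows "\<exists>d>0. \<forall>s\<in>{0..T}. \<bar>s - t\<bar> < d \<longrightarrow> \<bar>meanM M h s - meanM M h t\<bar> \<le> e"
proof -
  obtain d where d: "d > 0" "\<forall>s\<in>{0..T}. \<bar>s - t\<bar> < d \<longrightarrow> (\<forall>x. \<bar>h x s - h x t\<bar> \<le> e)"
    using h t e unfolding C_time_0 by meson
  show ?thesis
  proof (intro exI[of _ d] conjI ballI impI)
    fix s assume s: "s \<in> {0..T}" "\<bar>s - t\<bar> < d"
    have cs: "continuous_on {0..M} (\<lambda>y. h y s)" "continuous_on {0..M} (\<lambda>y. h y t)"
      using P0_xcont[OF h] s(1) t continuous_on_subset by blast+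
    have "meanM M h s - meanM M h t = (1/M) * integral {0..M} (\<lambda>y. h y s - h y t)"
      using mean_int[OF h s(1)] mean_int[OF h t]
      by (simp add: integral_diff integrable_continuous_real[OF cs(1)] integrable_continuous_real[OF cs(2)] algebra_simps)
    moreover have "norm (integral {0..M} (\<lambda>y. h y s - h y t)) \<le> e * (M - 0)"
      by (rule integral_bound[OF _ continuous_on_diff[OF cs(1) cs(2)]]) (use MT d s in auto)
    ultimately show "\<bar>meanM M h s - meanM M h t\<bar> \<le> e" using MT
      by (simp add: abs_mult pos_divide_le_eq)
  qed (use d in simp)
qed

lemma mean_cont:
  assumes h: "P M T 0 h"
  shows "continuous_on {0..T} (meanM M h)"
  unfolding continuous_on_iff
proof (intro ballI allI impI)
  fix t e :: real assume t: "t \<in> {0..T}" and e: "0 < e"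
  obtain d where "d > 0" "\<forall>s\<in>{0..T}. \<bar>s - t\<bar> < d \<longrightarrow> \<bar>meanM M h s - meanM M h t\<bar> \<le> e/2"
    using mean_est[OF h t] e by (meson half_gt_zero)
  then show "\<exists>d>0. \<forall>s\<in>{0..T}. dist s t < d \<longrightarrow> dist (meanM M h s) (meanM M h t) < e"
    using e by (auto simp: dist_real_def intro!: exI[of _ d])
qed

lemma Iop_deriv:
  assumes h: "P M T 0 h" and t: "t \<in> {0..T}"
  shows "((\<lambda>y. Iop M h y t) has_real_derivative (h x t - meanM M h t)) (at x)"
  unfolding Iop_def
  by (rule LBINT_deriv[of "\<lambda>y. h y t - meanM M h t"])
     (intro continuous_intros P0_xcont[OF h t])

lemma Iop_int:
  assumes h: "P M T 0 h" and t: "t \<in> {0..T}" and x: "0 \<le> x"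
  shows "Iop M h x t = integral {0..x} (\<lambda>y. h y t) - x * meanM M h t"
proof -
  have c: "continuous_on UNIV (\<lambda>y. h y t)" by (rule P0_xcont[OF h t])
  have c': "continuous_on {0..x} (\<lambda>y. h y t)" using c continuous_on_subset by blast
  have "Iop M h x t = integral {0..x} (\<lambda>y. h y t - meanM M h t)"
    unfolding Iop_def by (rule LBINT_eq[OF _ x]) (intro continuous_intros c)
  also have "\<dots> = integral {0..x} (\<lambda>y. h y t) - x * meanM M h t"
    using x by (simp add: integral_diff[OF integrable_continuous_real[OF c'] integrable_const_ivl])
  finally show ?thesis .
qed

lemma Iop_per:
  assumes h: "P M T 0 h" and t: "t \<in> {0..T}"
  shows "Iop M h (x + M) t = Iop M h x t"
proof -
  let ?F = "\<lambda>x. Iop M h (x + M) t - Iop M h x t"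
  have "\<forall>x. DERIV ?F x :> 0"
  proof
    fix x
    have "((\<lambda>y. Iop M h (y + M) t) has_real_derivative (h (x + M) t - meanM M h t) * 1) (at x)"
      by (rule DERIV_chain2[where f="\<lambda>y. Iop M h y t", OF Iop_deriv[OF h t]])
         (auto intro!: derivative_eq_intros)
    from DERIV_diff[OF this Iop_deriv[OF h t, of x]] show "DERIV ?F x :> 0"
      using P0_xper[OF h t] by simp
  qed
  then have "?F x = ?F 0" by (rule DERIV_isconst_all)
  also have "?F 0 = 0"
    using Iop_int[OF h t, of M] Iop_int[OF h t, of 0] mean_int[OF h t] MT by simp
  finally show ?thesis by simp
qed

lemma P0_Iop:
  assumes h: "P M T 0 h"
  shows "P M T 0 (Iop M h)"
  unfolding C_time_0
proof (intro conjI ballI allI impI)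
  fix t :: real assume t: "t \<in> {0..T}"
  show "continuous_on UNIV (\<lambda>x. Iop M h x t)"
    using Iop_deriv[OF h t] by (meson DERIV_isCont continuous_at_imp_continuous_on)
  fix x show "Iop M h (x + M) t = Iop M h x t" by (rule Iop_per[OF h t])
next
  fix t e :: real assume t: "t \<in> {0..T}" and e: "0 < e"
  define e' where "e' = e / (2 * M)"
  have e': "e' > 0" using e MT by (simp add: e'_def)
  obtain d1 where d1: "d1 > 0" "\<forall>s\<in>{0..T}. \<bar>s - t\<bar> < d1 \<longrightarrow> (\<forall>x. \<bar>h x s - h x t\<bar> \<le> e')"
    using h t e' unfolding C_time_0 by meson
  obtain d2 where d2: "d2 > 0" "\<forall>s\<in>{0..T}. \<bar>s - t\<bar> < d2 \<longrightarrow> \<bar>meanM M h s - meanM M h t\<bar> \<le> e'"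
    using mean_est[OF h t e'] by blast
  show "\<exists>\<delta>>0. \<forall>s\<in>{0..T}. \<bar>s - t\<bar> < \<delta> \<longrightarrow> (\<forall>x. \<bar>Iop M h x s - Iop M h x t\<bar> \<le> e)"
  proof (intro exI[of _ "min d1 d2"] conjI ballI impI allI)
    fix s x assume s: "s \<in> {0..T}" "\<bar>s - t\<bar> < min d1 d2"
    obtain k where k: "x + real_of_int k * M \<in> {0..M}" using red_ex MT by blast
    let ?x = "x + real_of_int k * M"
    have ps: "Iop M h ?x s = Iop M h x s"
      by (rule per_int[of "\<lambda>x. Iop M h x s"]) (use Iop_per[OF h s(1)] in simp)
    have pt: "Iop M h ?x t = Iop M h x t"
      by (rule per_int[of "\<lambda>x. Iop M h x t"]) (use Iop_per[OF h t] in simp)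
    have cs: "continuous_on {0..?x} (\<lambda>y. h y s)" "continuous_on {0..?x} (\<lambda>y. h y t)"
      using P0_xcont[OF h] s(1) t continuous_on_subset by blast+
    have x0: "0 \<le> ?x" "?x \<le> M" using k by auto
    have i: "integral {0..?x} (\<lambda>y. h y s - h y t) = integral {0..?x} (\<lambda>y. h y s) - integral {0..?x} (\<lambda>y. h y t)"
      by (rule integral_diff[OF integrable_continuous_real[OF cs(1)] integrable_continuous_real[OF cs(2)]])
    have "Iop M h ?x s - Iop M h ?x t = integral {0..?x} (\<lambda>y. h y s - h y t) - ?x * (meanM M h s - meanM M h t)"
      unfolding i Iop_int[OF h s(1) x0(1)] Iop_int[OF h t x0(1)] by (simp add: algebra_simps)
    moreover have "norm (integral {0..?x} (\<lambda>y. h y s - h y t)) \<le> e' * (?x - 0)"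
      by (rule integral_bound[OF _ continuous_on_diff[OF cs(1) cs(2)]]) (use x0 d1 s in auto)
    moreover have "\<bar>?x * (meanM M h s - meanM M h t)\<bar> \<le> M * e'"
      using x0 d2 s by (auto simp: abs_mult intro!: mult_mono)
    moreover have "e' * (?x - 0) \<le> M * e'" using x0 e' by (simp add: mult.commute)
    moreover have "M * e' + M * e' = e" using MT by (simp add: e'_def)
    ultimately have "\<bar>Iop M h ?x s - Iop M h ?x t\<bar> \<le> e"
      unfolding real_norm_def
      using abs_triangle_ineq4[of "integral {0..?x} (\<lambda>y. h y s - h y t)" "?x * (meanM M h s - meanM M h t)"]
      by linarith
    then show "\<bar>Iop M h x s - Iop M h x t\<bar> \<le> e" using ps pt by simp
  qed (use d1 d2 in simp)
qed

lemma P_Iop: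
  assumes "P M T k h"
  shows "P M T (Suc k) (Iop M h)"
proof -
  have h0: "P M T 0 h" using P_mono'[OF MT assms] by simp
  show ?thesis
  proof (rule P_SucI[OF MT P0_Iop[OF h0], where w'="\<lambda>x t. h x t - meanM M h t"])
    show "\<And>t x. t \<in> {0..T} \<Longrightarrow> ((\<lambda>y. Iop M h y t) has_real_derivative h x t - meanM M h t) (at x)"
      by (rule Iop_deriv[OF h0])
    show "P M T k (\<lambda>x t. h x t - meanM M h t)"
      by (rule P_diff[OF MT assms P_const[OF MT mean_cont[OF h0]]])
  qed
qed

end


context fixes M T :: real assumes MT: "M > 0" "T > 0"
begin

lemma P0_cont_swap:
  assumes "P M T 0 J"
  shows "continuous_on ({0..T} \<times> {0..x}) (\<lambda>(s,y). J y s)"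
proof -
  have "continuous_on ({0..T} \<times> {0..x}) ((\<lambda>(x,t). J x t) \<circ> (\<lambda>(s,y). (y,s)))"
    by (rule continuous_on_compose[OF _ continuous_on_subset[OF P0_cont[OF MT assms]]])
       (auto intro!: continuous_intros simp: case_prod_beta)
  then show ?thesis by (simp add: o_def case_prod_beta)
qed

lemma int_tderiv:
  assumes J: "P M T 0 J" and h: "P M T 0 h"
    and d: "\<And>y s. s \<in> {0..T} \<Longrightarrow> ((\<lambda>s. h y s) has_real_derivative J y s) (at s within {0..T})"
    and t: "t \<in> {0..T}"
  shows "((\<lambda>s. integral {0..x} (\<lambda>y. h y s)) has_real_derivative integral {0..x} (\<lambda>y. J y t)) (at t within {0..T})"
proof -
  have "((\<lambda>s. integral (cbox 0 x) (\<lambda>y. h y s)) has_field_derivative integral (cbox 0 x) (\<lambda>y. J y t)) (at t within {0..T})"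
  proof (rule leibniz_rule_field_derivative[where f="\<lambda>s y. h y s" and fx="\<lambda>s y. J y s"])
    show "\<And>s y. s \<in> {0..T} \<Longrightarrow> y \<in> cbox 0 x \<Longrightarrow> ((\<lambda>s. h y s) has_field_derivative J y s) (at s within {0..T})"
      using d by blast
    show "\<And>s. s \<in> {0..T} \<Longrightarrow> (\<lambda>y. h y s) integrable_on cbox 0 x"
      unfolding cbox_interval
      by (rule integrable_continuous_real, rule continuous_on_subset[OF P0_xcont[OF MT h]]) auto
    show "continuous_on ({0..T} \<times> cbox 0 x) (\<lambda>(s, y). J y s)"
      unfolding cbox_interval by (rule P0_cont_swap[OF J])
  qed (use t in auto)
  then show ?thesis unfolding cbox_interval .
qed

lemma Iop_tderiv:
  assumes J: "P M T 0 J" and h: "P M T 0 h"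
    and d: "\<And>y s. s \<in> {0..T} \<Longrightarrow> ((\<lambda>s. h y s) has_real_derivative J y s) (at s within {0..T})"
    and t: "t \<in> {0..T}" and x: "0 \<le> x"
  shows "((\<lambda>s. Iop M h x s) has_real_derivative Iop M J x t) (at t within {0..T})"
proof -
  have "((\<lambda>s. integral {0..x} (\<lambda>y. h y s) - x * ((1/M) * integral {0..M} (\<lambda>y. h y s)))
     has_real_derivative integral {0..x} (\<lambda>y. J y t) - x * ((1/M) * integral {0..M} (\<lambda>y. J y t))) (at t within {0..T})"
    by (intro DERIV_diff DERIV_cmult int_tderiv[OF J h d t])
  moreover have "integral {0..x} (\<lambda>y. J y t) - x * ((1/M) * integral {0..M} (\<lambda>y. J y t)) = Iop M J x t"
    using Iop_int[OF MT J t x] mean_int[OF MT J t] by simp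
  ultimately have D: "((\<lambda>s. integral {0..x} (\<lambda>y. h y s) - x * ((1/M) * integral {0..M} (\<lambda>y. h y s)))
     has_real_derivative Iop M J x t) (at t within {0..T})" by simp
  show ?thesis
    by (rule has_field_derivative_transform_within[OF D zero_less_one t])
       (use Iop_int[OF MT h _ x] mean_int[OF MT h] in simp)
qed

end


lemma Ck_per_derivs: "Ck_per M k f \<Longrightarrow> j \<le> k \<Longrightarrow> (deriv ^^ j) f (x + M) = (deriv ^^ j) f x"
proof (induction j arbitrary: f k)
  case 0 thus ?case by (simp add: Ck_per_def)
next
  case (Suc j)
  then obtain k' where k: "k = Suc k'" by (cases k) auto
  have "Ck_per M k' (deriv f)" using Suc.prems(1) Ck_per_Suc k by blast
  then have "(deriv ^^ j) (deriv f) (x + M) = (deriv ^^ j) (deriv f) x" using Suc.IH Suc.prems(2) k by simp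
  thus ?case by (simp only: funpow_Suc_right comp_apply)
qed

theorem lemma3:
  fixes M T :: real and n :: nat and a b :: "real \<Rightarrow> real \<Rightarrow> real"
  assumes "M > 0" and "T > 0" and "n \<ge> 4"
    and "C_time_Ck M T (n + 3) a"
    and "\<exists>a_t. is_time_deriv T a a_t \<and> C_time_Ck M T n a_t"
    and "C_time_Ck M T (n + 2) b"
    and "\<exists>bt. is_time_deriv T b bt \<and> C_time_Ck M T n bt"
    and "\<exists>a0>0. \<forall>x\<in>{0..M}. \<forall>t\<in>{0..T}. a x t \<ge> a0"
    and "\<forall>t\<in>{0..T}. delta_bar M a b t \<ge> 0"
  shows "(\<exists>kg>1. \<forall>x\<in>{0..M}. \<forall>t\<in>{0..T}. 1 / kg \<le> g_n M n a b x t \<and> g_n M n a b x t \<le> kg)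
       \<and> C_time_Ck M T (n + 3) (g_n M n a b)
       \<and> (\<exists>gt. is_time_deriv T (g_n M n a b) gt \<and> C_time_Ck M T n gt)
       \<and> (\<forall>j\<le>n. \<forall>t\<in>{0..T}. (deriv ^^ j) (\<lambda>x. g_n M n a b x t) 0 = (deriv ^^ j) (\<lambda>x. g_n M n a b x t) M)
       \<and> (\<forall>x\<in>{0..M}. \<forall>t\<in>{0..T}.
            (3/2 - real n) * deriv (\<lambda>y. a y t) x - b x t
              - 3 * a x t * deriv (\<lambda>y. g_n M n a b y t) x / g_n M n a b x t \<le> 0)"
proof -
  note MT = assms(1,2)
  obtain aT where AT: "is_time_deriv T a aT" "C_time_Ck M T n aT" using assms(5) by blast
  obtain bt where bt: "is_time_deriv T b bt" "C_time_Ck M T n bt" using assms(7) by blast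
  obtain a0 where a0: "a0 > 0" "\<forall>x\<in>{0..M}. \<forall>t\<in>{0..T}. a x t \<ge> a0" using assms(8) by blast
  have A: "P M T (n+3) a" by (rule assms(4))
  have A0: "P M T 0 a" using P_mono'[OF MT A] by simp
  have apos: "a x t \<ge> a0" if t: "t \<in> {0..T}" for x t
  proof -
    obtain k :: int where k: "x + real_of_int k * M \<in> {0..M}" using red_ex MT(1) by blast
    have "a (x + real_of_int k * M) t = a x t"
      by (rule per_int[of "\<lambda>x. a x t"]) (use P0_xper[OF MT A0 t] in simp)
    then show "a x t \<ge> a0" using a0 k t by metis
  qed
  have pos: "a x t > 0" if "t \<in> {0..T}" for x t using apos[of t x, OF that] a0(1) by linarith
  define p where "p = 1/2 - real n / 3"
  define h where "h = (\<lambda>x t. b x t * (1 / a x t))"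
  define I where "I = Iop M h"
  define G where "G = (\<lambda>x t. exp (p * ln (a x t) - (1/3) * I x t))"
  have A2: "P M T (n+2) a" using P_mono'[OF MT A] by simp
  have Ainv: "P M T (n+2) (\<lambda>x t. 1 / a x t)" by (rule P_inv[OF MT a0(1) apos A2])
  have H: "P M T (n+2) h" unfolding h_def by (rule P_mult[OF MT assms(6) Ainv])
  have H0: "P M T 0 h" using P_mono'[OF MT H] by simp
  have II: "P M T (n+3) I" unfolding I_def using P_Iop[OF MT H] by (simp add: numeral_3_eq_3)
  have Lna: "P M T (n+3) (\<lambda>x t. ln (a x t))" by (rule P_ln[OF MT a0(1) apos A])
  have GG: "P M T (n+3) G" unfolding G_def
    by (intro P_exp[OF MT] P_diff[OF MT] P_cmult[OF MT] Lna II)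
  have G0: "P M T 0 G" using P_mono'[OF MT GG] by simp
  have dm: "delta_bar M a b t = meanM M h t" if t: "t \<in> {0..T}" for t
  proof -
    have e1: "(\<lambda>y. b y t / \<bar>a y t\<bar>) = (\<lambda>y. h y t)" using pos[OF t] by (auto simp: h_def abs_of_pos)
    show ?thesis unfolding delta_bar_def meanM_def e1 ..
  qed
  have gG: "g_n M n a b x t = G x t" if t: "t \<in> {0..T}" for x t
  proof -
    have e3: "(\<lambda>y. b y t / a y t - delta_bar M a b t) = (\<lambda>y. h y t - meanM M h t)"
      using dm[OF t] by (auto simp: h_def)
    show ?thesis unfolding g_n_def e3 G_def I_def Iop_def p_def
      using pos[OF t, of x] by (simp add: powr_def mult_exp_exp algebra_simps)
  qed
  have C1: "\<exists>kg>1. \<forall>x\<in>{0..M}. \<forall>t\<in>{0..T}. 1 / kg \<le> g_n M n a b x t \<and> g_n M n a b x t \<le> kg"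
  proof -
    let ?u = "\<lambda>x t. p * ln (a x t) - (1/3) * I x t"
    have U3: "P M T (n+3) ?u" by (intro P_diff[OF MT] P_cmult[OF MT] Lna II)
    have U: "P M T 0 ?u" by (rule P_mono'[OF MT U3 le0])
    have Gi: "P M T 0 (\<lambda>x t. exp ((-1) * ?u x t))" by (intro P_exp[OF MT] P_cmult[OF MT] U)
    obtain B1 where B1: "\<forall>x. \<forall>t\<in>{0..T}. \<bar>G x t\<bar> \<le> B1" using P0_bdd[OF MT G0] by blast
    obtain B2 where B2: "\<forall>x. \<forall>t\<in>{0..T}. \<bar>exp ((-1) * ?u x t)\<bar> \<le> B2" using P0_bdd[OF MT Gi] by blast
    define kg where "kg = max 2 (max B1 B2)"
    show ?thesis
    proof (intro exI[of _ kg] conjI ballI)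
      show "1 < kg" unfolding kg_def by simp
      fix x t assume x: "x \<in> {0..M}" and t: "t \<in> {0..T}"
      have "G x t \<le> B1" using B1 t by (meson abs_ge_self order_trans)
      then show "g_n M n a b x t \<le> kg" unfolding gG[OF t] kg_def by simp
      have "exp ((-1) * ?u x t) \<le> B2" using B2 t by (meson abs_ge_self order_trans)
      then have le: "exp ((-1) * ?u x t) \<le> kg" unfolding kg_def by simp
      have "1 / kg \<le> 1 / exp ((-1) * ?u x t)"
        by (rule divide_left_mono[OF le]) (auto simp: kg_def intro!: mult_pos_pos)
      also have "\<dots> = G x t" unfolding G_def by (simp add: exp_diff)
      finally show "1 / kg \<le> g_n M n a b x t" unfolding gG[OF t] .
    qed
  qed
  have C2a: "C_time_Ck M T (n + 3) (g_n M n a b)"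
    by (rule P_cong[OF MT GG]) (simp add: gG)
  have C3: "\<forall>j\<le>n. \<forall>t\<in>{0..T}. (deriv ^^ j) (\<lambda>x. g_n M n a b x t) 0 = (deriv ^^ j) (\<lambda>x. g_n M n a b x t) M"
  proof (intro allI impI ballI)
    fix j t assume j: "j \<le> n" and t: "t \<in> {0..T}"
    have "Ck_per M (n+3) (\<lambda>x. g_n M n a b x t)" using C2a t unfolding C_time_Ck_def by blast
    from Ck_per_derivs[OF this, of j 0] j show "(deriv ^^ j) (\<lambda>x. g_n M n a b x t) 0 = (deriv ^^ j) (\<lambda>x. g_n M n a b x t) M"
      by simp
  qed
  have C4: "\<forall>x\<in>{0..M}. \<forall>t\<in>{0..T}.
            (3/2 - real n) * deriv (\<lambda>y. a y t) x - b x t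
              - 3 * a x t * deriv (\<lambda>y. g_n M n a b y t) x / g_n M n a b x t \<le> 0"
  proof (intro ballI)
    fix x t assume x: "x \<in> {0..M}" and t: "t \<in> {0..T}"
    have AS: "P M T (Suc (n+2)) a" using A by (simp add: numeral_3_eq_3)
    have ad: "((\<lambda>y. a y t) has_real_derivative Dx a x t) (at x)" by (rule P_SucD(2)[OF MT AS t])
    show "(3/2 - real n) * deriv (\<lambda>y. a y t) x - b x t
              - 3 * a x t * deriv (\<lambda>y. g_n M n a b y t) x / g_n M n a b x t \<le> 0"
    proof -
      have Id: "((\<lambda>y. I y t) has_real_derivative (h x t - meanM M h t)) (at x)"
        unfolding I_def by (rule Iop_deriv[OF MT H0 t])
      have Gd: "((\<lambda>y. G y t) has_real_derivative G x t * (p * (Dx a x t * (1 / a x t)) - (1/3) * (h x t - meanM M h t))) (at x)"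
        unfolding G_def using pos[OF t]
        by (auto intro!: derivative_eq_intros ad Id simp: field_simps)
      have e: "(\<lambda>y. g_n M n a b y t) = (\<lambda>y. G y t)" using gG[OF t] by auto
      have d1: "deriv (\<lambda>y. G y t) x = G x t * (p * (Dx a x t * (1 / a x t)) - (1/3) * (h x t - meanM M h t))"
        by (rule DERIV_imp_deriv[OF Gd])
      have d2: "deriv (\<lambda>y. a y t) x = Dx a x t" by (simp add: Dx_def)
      have Gp: "G x t > 0" unfolding G_def by simp
      have ap: "a x t > 0" by (rule pos[OF t])
      have hx: "h x t = b x t / a x t" by (simp add: h_def)
      have "delta_bar M a b t \<ge> 0" using assms(9) t by blast
      then have m: "meanM M h t \<ge> 0" using dm[OF t] by simp
      have "(3/2 - real n) * deriv (\<lambda>y. a y t) x - b x t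
              - 3 * a x t * deriv (\<lambda>y. g_n M n a b y t) x / g_n M n a b x t = - (a x t * meanM M h t)"
        unfolding e d1 d2 gG[OF t] hx using Gp ap by (simp add: p_def field_simps)
      also have "\<dots> \<le> 0" using ap m by simp
      finally show ?thesis .
    qed
  qed
  have C2b: "\<exists>gt. is_time_deriv T (g_n M n a b) gt \<and> C_time_Ck M T n gt"
  proof -
    define J where "J = (\<lambda>x t. ((bt x t * a x t - b x t * aT x t) * (1 / a x t)) * (1 / a x t))"
    define gt where "gt = (\<lambda>x t. G x t * (p * (aT x t * (1 / a x t)) - (1/3) * Iop M J x t))"
    have An: "P M T n a" using P_mono'[OF MT A] by simp
    have Bn: "P M T n b" using P_mono'[OF MT assms(6)] by simp
    have Ainvn: "P M T n (\<lambda>x t. 1 / a x t)" using P_mono'[OF MT Ainv] by simp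
    have Gn: "P M T n G" using P_mono'[OF MT GG] by simp
    have JJ: "P M T n J" unfolding J_def
      by (intro P_mult[OF MT] P_diff[OF MT] bt(2) AT(2) An Bn Ainvn)
    have J0: "P M T 0 J" using P_mono'[OF MT JJ] by simp
    have IJ: "P M T n (Iop M J)" using P_mono'[OF MT P_Iop[OF MT JJ]] by simp
    have GT: "P M T n gt" unfolding gt_def
      by (intro P_mult[OF MT] P_diff[OF MT] P_cmult[OF MT] Gn IJ AT(2) Ainvn)
    have GT0: "P M T 0 gt" using P_mono'[OF MT GT] by simp
    have hd: "((\<lambda>s. h y s) has_real_derivative J y s) (at s within {0..T})" if s: "s \<in> {0..T}" for y s
    proof -
      have ad: "((\<lambda>s. a y s) has_real_derivative aT y s) (at s within {0..T})"
        using AT(1) s unfolding is_time_deriv_def by blast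
      have bd: "((\<lambda>s. b y s) has_real_derivative bt y s) (at s within {0..T})"
        using bt(1) s unfolding is_time_deriv_def by blast
      have "a y s > 0" by (rule pos[OF s])
      then show ?thesis unfolding h_def J_def
        by (auto intro!: derivative_eq_intros ad bd simp: field_simps power2_eq_square)
    qed
    have Gd: "((\<lambda>s. G x s) has_real_derivative gt x t) (at t within {0..T})"
      if x: "x \<in> {0..M}" and t: "t \<in> {0..T}" for x t
    proof -
      have ad: "((\<lambda>s. a x s) has_real_derivative aT x t) (at t within {0..T})"
        using AT(1) t unfolding is_time_deriv_def by blast
      have Id: "((\<lambda>s. I x s) has_real_derivative Iop M J x t) (at t within {0..T})"
        unfolding I_def by (rule Iop_tderiv[OF MT J0 H0 hd t]) (use x in auto)
      show ?thesis unfolding G_def gt_def using pos[OF t, of x]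
        by (auto intro!: derivative_eq_intros ad Id simp: field_simps)
    qed
    have Gd': "((\<lambda>s. g_n M n a b x s) has_real_derivative gt x t) (at t within {0..T})"
      if t: "t \<in> {0..T}" for x t
    proof -
      obtain k :: int where k: "x + real_of_int k * M \<in> {0..M}" using red_ex MT(1) by blast
      let ?x = "x + real_of_int k * M"
      have pG: "G ?x s = G x s" if "s \<in> {0..T}" for s
        by (rule per_int[of "\<lambda>x. G x s"]) (use P0_xper[OF MT G0 that] in simp)
      have pg: "gt ?x t = gt x t"
        by (rule per_int[of "\<lambda>x. gt x t"]) (use P0_xper[OF MT GT0 t] in simp)
      have "((\<lambda>s. G ?x s) has_real_derivative gt x t) (at t within {0..T})"
        using Gd[OF k t] pg by simp
      then show ?thesis
        by (rule has_field_derivative_transform_within[OF _ zero_less_one t])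
           (simp add: pG gG)
    qed
    have "is_time_deriv T (g_n M n a b) gt" unfolding is_time_deriv_def using Gd' by blast
    then show ?thesis using GT by blast
  qed
  show ?thesis using C1 C2a C2b C3 C4 by blast
qed

end
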